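(* Let $(\Omega,\mathcal{F},(\mathcal{F}_t)_{t\in[0,T]},P)$ be a filtered probability space, $T>0$, and let $(X_t)_{t\in[0,T]}$ be a continuous martingale whose initial value $X_0$ is a deterministic constant. Let $M_T=\max_{0\le s\le T}X_s$. Then $$E\left(M_T\right)\le\sqrt{2}\,E\left(X_T^2\right)^{1/2}.$$ *)

theory Defs
  imports "HOL-Probability.Probability"
begin

definition cont_martingale ::
  "'a measure \<Rightarrow> (real \<Rightarrow> 'a measure) \<Rightarrow> real \<Rightarrow> (real \<Rightarrow> 'a \<Rightarrow> real) \<Rightarrow> bool" where
  "cont_martingale M F T X \<longleftrightarrow>
     prob_space M \<and>
     (\<forall>t\<in>{0..T}. subalgebra M (F t)) \<and>
     (\<forall>s t. 0 \<le> s \<longrightarrow> s \<le> t \<longrightarrow> t \<le> T \<longrightarrow> sets (F s) \<subseteq> sets (F t)) \<and>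
     (\<forall>t\<in>{0..T}. X t \<in> borel_measurable (F t)) \<and>
     (\<forall>t\<in>{0..T}. integrable M (X t)) \<and>
     (\<forall>s t. 0 \<le> s \<longrightarrow> s \<le> t \<longrightarrow> t \<le> T \<longrightarrow>
        (AE \<omega> in M. real_cond_exp M (F s) (X t) \<omega> = X s \<omega>)) \<and>
     (\<forall>\<omega>\<in>space M. continuous_on {0..T} (\<lambda>t. X t \<omega>))"

end

theory Submission
  imports Defs
begin

lemma grid_lim:
  fixes g :: "real \<Rightarrow> real" and T :: real
  assumes T: "T > 0" and g: "continuous_on {0..T} g"
  shows "mono (\<lambda>n::nat. Max ((\<lambda>k. g (T * real k / 2^n)) ` {..(2::nat)^n}))"
    "(\<lambda>n::nat. Max ((\<lambda>k. g (T * real k / 2^n)) ` {..(2::nat)^n})) \<longlonglongrightarrow> (SUP s\<in>{0..T}. g s)"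
proof -
  define S where "S = (\<lambda>n::nat. Max ((\<lambda>k. g (T * real k / 2^n)) ` {..(2::nat)^n}))"
  have grid: "T * real k / 2^n \<in> {0..T}" if "k \<le> 2^n" for k n :: nat
  proof -
    have "real k \<le> 2^n" using that by (metis of_nat_le_iff of_nat_numeral of_nat_power)
    then have "T * real k \<le> T * 2^n" using T by simp
    then show ?thesis using T by (simp add: field_simps)
  qed
  have "compact (g ` {0..T})" by (rule compact_continuous_image[OF g]) simp
  then have bdd: "bdd_above (g ` {0..T})" by (simp add: bounded_imp_bdd_above compact_imp_bounded)
  obtain s0 where s0: "s0 \<in> {0..T}" "\<And>y. y \<in> {0..T} \<Longrightarrow> g y \<le> g s0"
  proof -
    have "{0..T} \<noteq> {}" using T by simp
    then show ?thesis using continuous_attains_sup[OF compact_Icc _ g] that by blast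
  qed
  have SUPeq: "(SUP s\<in>{0..T}. g s) = g s0"
    using T by (intro antisym cSUP_least cSUP_upper2[OF bdd s0(1)]) (auto intro!: s0(2))
  have Sle: "S n \<le> g s0" for n
    unfolding S_def by (subst Max_le_iff) (auto intro!: s0(2) grid)
  have Smono: "S n \<le> S (Suc n)" for n
    unfolding S_def
  proof (rule Max_mono)
    show "(\<lambda>k. g (T * real k / 2 ^ n)) ` {..2 ^ n} \<subseteq> (\<lambda>k. g (T * real k / 2 ^ Suc n)) ` {..2 ^ Suc n}"
    proof
      fix y assume "y \<in> (\<lambda>k. g (T * real k / 2 ^ n)) ` {..2 ^ n}"
      then obtain k where k: "k \<le> 2^n" "y = g (T * real k / 2 ^ n)" by auto
      have "y = g (T * real (2*k) / 2 ^ Suc n)" using k by simp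
      moreover have "2*k \<le> 2 ^ Suc n" using k by simp
      ultimately show "y \<in> (\<lambda>k. g (T * real k / 2 ^ Suc n)) ` {..2 ^ Suc n}" by blast
    qed
  qed auto
  show "mono (\<lambda>n::nat. Max ((\<lambda>k. g (T * real k / 2^n)) ` {..(2::nat)^n}))"
    using Smono unfolding S_def[symmetric] by (simp add: incseq_Suc_iff)
  define kk where "kk = (\<lambda>n::nat. nat \<lfloor>s0 * 2^n / T\<rfloor>)"
  define t where "t = (\<lambda>n::nat. T * real (kk n) / 2^n)"
  have kk: "kk n \<le> 2^n" "t n \<le> s0" "s0 - T / 2^n \<le> t n" for n
  proof -
    have x0: "0 \<le> s0 * 2^n / T" using s0 T by simp
    have rk: "real (kk n) = \<lfloor>s0 * 2^n / T\<rfloor>" unfolding kk_def using x0 by simp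
    have a: "real (kk n) \<le> s0 * 2^n / T" using rk by linarith
    have b: "s0 * 2^n / T < real (kk n) + 1" using rk by linarith
    have "s0 * 2^n / T \<le> 2^n" using s0 T by (simp add: field_simps)
    then have "real (kk n) \<le> 2^n" using a by linarith
    then show "kk n \<le> 2^n" by (metis of_nat_le_iff of_nat_numeral of_nat_power)
    have "T * real (kk n) \<le> T * (s0 * 2^n / T)" using a T by (intro mult_left_mono) auto
    then show "t n \<le> s0" unfolding t_def using T by (simp add: field_simps)
    have "T * (s0 * 2^n / T) \<le> T * (real (kk n) + 1)" using b T by (intro mult_left_mono) auto
    then have "s0 * 2^n \<le> T * real (kk n) + T" using T by (simp add: algebra_simps)
    then have "s0 \<le> (T * real (kk n) + T) / 2^n" by (simp add: pos_le_divide_eq)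
    then show "s0 - T / 2^n \<le> t n" unfolding t_def by (simp add: add_divide_distrib)
  qed
  have "(\<lambda>n. s0 - T / 2^n) \<longlonglongrightarrow> s0 - 0"
    by (intro tendsto_intros LIMSEQ_divide_realpow_zero) simp
  then have tlim: "t \<longlonglongrightarrow> s0"
    by (intro tendsto_sandwich[of "\<lambda>n. s0 - T / 2^n" t _ "\<lambda>_. s0"]) (auto intro!: always_eventually kk)
  have gt: "(\<lambda>n. g (t n)) \<longlonglongrightarrow> g s0"
    by (rule continuous_on_tendsto_compose[OF g tlim s0(1)]) (use grid kk(1) in \<open>auto simp: t_def intro!: always_eventually\<close>)
  have "g (t n) \<le> S n" for n
    unfolding S_def t_def by (rule Max_ge) (auto intro: kk)
  then have "S \<longlonglongrightarrow> g s0"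
    by (intro tendsto_sandwich[OF _ _ gt tendsto_const]) (auto intro!: always_eventually Sle)
  then show "(\<lambda>n::nat. Max ((\<lambda>k. g (T * real k / 2^n)) ` {..(2::nat)^n})) \<longlonglongrightarrow> (SUP s\<in>{0..T}. g s)"
    unfolding S_def SUPeq .
qed

lemma abs_mult_le_sq: "\<bar>(a::real) * b\<bar> \<le> a\<^sup>2 + b\<^sup>2"
proof -
  have "2 * \<bar>a\<bar> * \<bar>b\<bar> \<le> \<bar>a\<bar>\<^sup>2 + \<bar>b\<bar>\<^sup>2" by (rule sum_squares_bound)
  then have "2 * (\<bar>a\<bar> * \<bar>b\<bar>) \<le> a\<^sup>2 + b\<^sup>2" by (simp add: mult.assoc)
  moreover have "0 \<le> \<bar>a\<bar> * \<bar>b\<bar>" by simp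
  ultimately show ?thesis unfolding abs_mult by linarith
qed

lemma path_ineq:
  fixes s y c yk :: real
  shows "(max y s - c)\<^sup>2 - 2 * (max y s - c) * (y - c) - ((s - c)\<^sup>2 - 2 * (s - c) * (yk - c))
         \<le> - 2 * ((s - c) * (y - yk))"
proof (cases "y \<le> s")
  case True then show ?thesis by (simp add: max_def power2_eq_square algebra_simps)
next
  case False
  have "0 \<le> (y - s)\<^sup>2" by simp
  with False show ?thesis by (simp add: max_def power2_eq_square algebra_simps)
qed

lemma final_arith:
  fixes e c V :: real
  assumes "(e - c)\<^sup>2 \<le> V - c\<^sup>2"
  shows "e \<le> sqrt 2 * sqrt V"
proof -
  have V0: "0 \<le> V" using assms by (smt (verit) zero_le_power2)
  have "e \<le> sqrt (2 * V)"
  proof (cases "e \<le> 0")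
    case True
    have "0 \<le> sqrt (2 * V)" using V0 by simp
    then show ?thesis using True by linarith
  next
    case False
    have "2 * c * (e - c) \<le> c\<^sup>2 + (e - c)\<^sup>2" by (rule sum_squares_bound)
    then have "e\<^sup>2 \<le> 2 * V" using assms by (simp add: power2_eq_square algebra_simps)
    then show ?thesis by (rule real_le_rsqrt)
  qed
  then show ?thesis by (simp add: real_sqrt_mult)
qed

lemma discrete_bound:
  fixes M :: "'a measure" and G :: "nat \<Rightarrow> 'a measure" and Y :: "nat \<Rightarrow> 'a \<Rightarrow> real"
    and m :: nat and c :: real
  assumes P: "prob_space M"
  and sub: "\<And>k. k \<le> m \<Longrightarrow> subalgebra M (G k)"
  and nest: "\<And>i k. i \<le> k \<Longrightarrow> k \<le> m \<Longrightarrow> sets (G i) \<subseteq> sets (G k)"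
  and meas: "\<And>k. k \<le> m \<Longrightarrow> Y k \<in> borel_measurable (G k)"
  and sq: "\<And>k. k \<le> m \<Longrightarrow> integrable M (\<lambda>\<omega>. (Y k \<omega>)\<^sup>2)"
  and intY: "\<And>k. k \<le> m \<Longrightarrow> integrable M (Y k)"
  and mart: "\<And>k. k < m \<Longrightarrow> AE \<omega> in M. real_cond_exp M (G k) (Y (Suc k)) \<omega> = Y k \<omega>"
  and c: "\<And>\<omega>. \<omega> \<in> space M \<Longrightarrow> Y 0 \<omega> = c"
  shows "integrable M (\<lambda>\<omega>. Max ((\<lambda>i. Y i \<omega>) ` {..m})) \<and>
         (\<integral>\<omega>. Max ((\<lambda>i. Y i \<omega>) ` {..m}) \<partial>M) \<le> sqrt 2 * sqrt (\<integral>\<omega>. (Y m \<omega>)\<^sup>2 \<partial>M)"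
proof -
  interpret prob_space M by (rule P)
  define S where "S = (\<lambda>k \<omega>. Max ((\<lambda>i. Y i \<omega>) ` {..k}))"
  have S0: "S 0 \<omega> = Y 0 \<omega>" for \<omega> by (simp add: S_def)
  have SSuc: "S (Suc k) \<omega> = max (Y (Suc k) \<omega>) (S k \<omega>)" for k \<omega>
    by (simp add: S_def atMost_Suc)
  have measG: "Y i \<in> borel_measurable (G k)" if "i \<le> k" "k \<le> m" for i k
  proof -
    have "subalgebra (G k) (G i)" using sub[of i] sub[of k] nest[of i k] that
      unfolding subalgebra_def by auto
    moreover have "i \<le> m" using that by simp
    ultimately show ?thesis by (rule measurable_from_subalg[OF _ meas])
  qed
  have measYM: "Y k \<in> borel_measurable M" if "k \<le> m" for k
    using measurable_from_subalg[OF sub meas] that by blast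
  have SG: "S k \<in> borel_measurable (G k)" if "k \<le> m" for k
    unfolding S_def by (rule borel_measurable_Max) (auto intro: measG that)
  have SM: "S k \<in> borel_measurable M" if "k \<le> m" for k
    using measurable_from_subalg[OF sub SG] that by blast
  have Sin: "\<exists>i\<le>k. S k \<omega> = Y i \<omega>" for k \<omega>
  proof -
    have "S k \<omega> \<in> (\<lambda>i. Y i \<omega>) ` {..k}" unfolding S_def by (rule Max_in) auto
    then show ?thesis by auto
  qed
  have Ssq: "(S k \<omega>)\<^sup>2 \<le> (\<Sum>i\<le>k. (Y i \<omega>)\<^sup>2)" for k \<omega>
  proof -
    obtain i where "i \<le> k" "S k \<omega> = Y i \<omega>" using Sin by blast
    then show ?thesis by (auto intro!: member_le_sum)
  qed
  have Sabs: "\<bar>S k \<omega>\<bar> \<le> (\<Sum>i\<le>k. \<bar>Y i \<omega>\<bar>)" for k \<omega>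
  proof -
    obtain i where "i \<le> k" "S k \<omega> = Y i \<omega>" using Sin by blast
    then show ?thesis by (auto intro!: member_le_sum)
  qed
  have intS: "integrable M (S k)" if "k \<le> m" for k
    by (rule Bochner_Integration.integrable_bound[where f="\<lambda>\<omega>. (\<Sum>i\<le>k. \<bar>Y i \<omega>\<bar>)"])
       (use that in \<open>auto intro!: Bochner_Integration.integrable_sum integrable_abs intY SM always_eventually order.trans[OF Sabs]\<close>)
  have intSS: "integrable M (\<lambda>\<omega>. (S k \<omega>)\<^sup>2)" if "k \<le> m" for k
    by (rule Bochner_Integration.integrable_bound[where f="\<lambda>\<omega>. (\<Sum>i\<le>k. (Y i \<omega>)\<^sup>2)"])
       (use that in \<open>auto intro!: Bochner_Integration.integrable_sum sq SM borel_measurable_power always_eventually order.trans[OF Ssq]\<close>)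
  have intprod: "integrable M (\<lambda>\<omega>. S k \<omega> * Y j \<omega>)" if "k \<le> m" "j \<le> m" for k j
  proof (rule Bochner_Integration.integrable_bound[where f="\<lambda>\<omega>. (S k \<omega>)\<^sup>2 + (Y j \<omega>)\<^sup>2"])
    show "integrable M (\<lambda>\<omega>. (S k \<omega>)\<^sup>2 + (Y j \<omega>)\<^sup>2)" using that intSS sq by auto
    show "(\<lambda>\<omega>. S k \<omega> * Y j \<omega>) \<in> borel_measurable M" using that SM measYM by (auto intro!: borel_measurable_times)
    show "AE \<omega> in M. norm (S k \<omega> * Y j \<omega>) \<le> norm ((S k \<omega>)\<^sup>2 + (Y j \<omega>)\<^sup>2)"
      using abs_mult_le_sq by (auto intro!: always_eventually)
  qed
  have orth: "(\<integral>\<omega>. S k \<omega> * Y (Suc k) \<omega> \<partial>M) = (\<integral>\<omega>. S k \<omega> * Y k \<omega> \<partial>M)" if "k < m" for k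
  proof -
    have "finite_measure_subalgebra M (G k)"
      by unfold_locales (use sub[of k] that in auto)
    then interpret sigma_finite_subalgebra M "G k"
      by (rule finite_measure_subalgebra_is_sigma_finite)
    have "(\<integral>\<omega>. S k \<omega> * real_cond_exp M (G k) (Y (Suc k)) \<omega> \<partial>M) = (\<integral>\<omega>. S k \<omega> * Y (Suc k) \<omega> \<partial>M)"
      by (rule real_cond_exp_intg(2)) (use that in \<open>auto intro: intprod SG measYM\<close>)
    moreover have "(\<integral>\<omega>. S k \<omega> * real_cond_exp M (G k) (Y (Suc k)) \<omega> \<partial>M) = (\<integral>\<omega>. S k \<omega> * Y k \<omega> \<partial>M)"
    proof (rule integral_cong_AE)
      show "(\<lambda>\<omega>. S k \<omega> * real_cond_exp M (G k) (Y (Suc k)) \<omega>) \<in> borel_measurable M"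
        using that SM by (auto intro!: borel_measurable_times measurable_from_subalg[OF subalg])
      show "(\<lambda>\<omega>. S k \<omega> * Y k \<omega>) \<in> borel_measurable M" using that SM measYM by auto
      show "AE \<omega> in M. S k \<omega> * real_cond_exp M (G k) (Y (Suc k)) \<omega> = S k \<omega> * Y k \<omega>"
        using mart[OF that] by eventually_elim simp
    qed
    ultimately show ?thesis by simp
  qed
  have EY: "(\<integral>\<omega>. Y k \<omega> \<partial>M) = c" if "k \<le> m" for k
    using that
  proof (induction k)
    case 0
    have "(\<integral>\<omega>. Y 0 \<omega> \<partial>M) = (\<integral>\<omega>. c \<partial>M)" by (rule Bochner_Integration.integral_cong) (auto intro: c)
    then show ?case by (simp add: prob_space)
  next
    case (Suc k)
    have "finite_measure_subalgebra M (G k)"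
      by unfold_locales (use sub[of k] Suc in auto)
    then interpret sigma_finite_subalgebra M "G k"
      by (rule finite_measure_subalgebra_is_sigma_finite)
    have "(\<integral>\<omega>. Y (Suc k) \<omega> \<partial>M) = (\<integral>\<omega>. real_cond_exp M (G k) (Y (Suc k)) \<omega> \<partial>M)"
      using real_cond_exp_int(2)[OF intY[OF Suc.prems]] by simp
    also have "\<dots> = (\<integral>\<omega>. Y k \<omega> \<partial>M)"
      by (rule integral_cong_AE) (use Suc measYM mart in auto)
    finally show ?case using Suc by simp
  qed
  have path: "(S k \<omega> - c)\<^sup>2 - 2 * (S k \<omega> - c) * (Y k \<omega> - c)
      \<le> - 2 * (\<Sum>j<k. (S j \<omega> - c) * (Y (Suc j) \<omega> - Y j \<omega>))" if "\<omega> \<in> space M" for k \<omega>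
  proof (induction k)
    case 0
    then show ?case using c[OF that] by (simp add: S0)
  next
    case (Suc k)
    have "(S (Suc k) \<omega> - c)\<^sup>2 - 2 * (S (Suc k) \<omega> - c) * (Y (Suc k) \<omega> - c)
       - ((S k \<omega> - c)\<^sup>2 - 2 * (S k \<omega> - c) * (Y k \<omega> - c))
       \<le> - 2 * ((S k \<omega> - c) * (Y (Suc k) \<omega> - Y k \<omega>))"
      unfolding SSuc by (rule path_ineq)
    with Suc show ?case by (simp add: algebra_simps)
  qed
  have zero: "(\<integral>\<omega>. (S j \<omega> - c) * (Y (Suc j) \<omega> - Y j \<omega>) \<partial>M) = 0" if "j < m" for j
  proof -
    have i1: "integrable M (\<lambda>\<omega>. S j \<omega> * Y (Suc j) \<omega>)" using that by (auto intro: intprod)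
    have i2: "integrable M (\<lambda>\<omega>. S j \<omega> * Y j \<omega>)" using that by (auto intro: intprod)
    have i3: "integrable M (Y (Suc j))" "integrable M (Y j)" using that by (auto intro: intY)
    have "(\<integral>\<omega>. (S j \<omega> - c) * (Y (Suc j) \<omega> - Y j \<omega>) \<partial>M)
        = (\<integral>\<omega>. (S j \<omega> * Y (Suc j) \<omega> - S j \<omega> * Y j \<omega>) - (c * Y (Suc j) \<omega> - c * Y j \<omega>) \<partial>M)"
      by (rule Bochner_Integration.integral_cong) (auto simp: algebra_simps)
    also have "\<dots> = ((\<integral>\<omega>. S j \<omega> * Y (Suc j) \<omega> \<partial>M) - (\<integral>\<omega>. S j \<omega> * Y j \<omega> \<partial>M))
                   - (c * (\<integral>\<omega>. Y (Suc j) \<omega> \<partial>M) - c * (\<integral>\<omega>. Y j \<omega> \<partial>M))"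
      using i1 i2 i3 by simp
    also have "\<dots> = 0" using orth[OF that] EY[of j] EY[of "Suc j"] that by simp
    finally show ?thesis .
  qed
  have intterm: "integrable M (\<lambda>\<omega>. (S j \<omega> - c) * (Y (Suc j) \<omega> - Y j \<omega>))" if "j < m" for j
  proof -
    have "integrable M (\<lambda>\<omega>. (S j \<omega> * Y (Suc j) \<omega> - S j \<omega> * Y j \<omega>) - (c * Y (Suc j) \<omega> - c * Y j \<omega>))"
    proof -
      have "integrable M (\<lambda>\<omega>. S j \<omega> * Y (Suc j) \<omega>)" "integrable M (\<lambda>\<omega>. S j \<omega> * Y j \<omega>)"
        "integrable M (Y (Suc j))" "integrable M (Y j)"
        using that by (auto intro: intprod intY)
      then show ?thesis by (intro Bochner_Integration.integrable_diff integrable_mult_right) auto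
    qed
    then show ?thesis by (simp add: algebra_simps)
  qed
  let ?A2 = "\<integral>\<omega>. (S m \<omega>)\<^sup>2 \<partial>M"
  let ?AB = "\<integral>\<omega>. S m \<omega> * Y m \<omega> \<partial>M"
  let ?ES = "\<integral>\<omega>. S m \<omega> \<partial>M"
  let ?V = "\<integral>\<omega>. (Y m \<omega>)\<^sup>2 \<partial>M"
  have im: "integrable M (\<lambda>\<omega>. (S m \<omega>)\<^sup>2)" "integrable M (\<lambda>\<omega>. S m \<omega> * Y m \<omega>)"
    "integrable M (Y m)" "integrable M (S m)" "integrable M (\<lambda>\<omega>. (Y m \<omega>)\<^sup>2)"
    by (auto intro: intSS intprod intY intS sq)
  have iL: "integrable M (\<lambda>\<omega>. (S m \<omega>)\<^sup>2 - 2 * (S m \<omega> * Y m \<omega>) + 2 * c * Y m \<omega> - c\<^sup>2)"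
    using im by (intro Bochner_Integration.integrable_diff Bochner_Integration.integrable_add integrable_mult_right) auto
  have "(\<integral>\<omega>. (S m \<omega>)\<^sup>2 - 2 * (S m \<omega> * Y m \<omega>) + 2 * c * Y m \<omega> - c\<^sup>2 \<partial>M)
      \<le> (\<integral>\<omega>. - 2 * (\<Sum>j<m. (S j \<omega> - c) * (Y (Suc j) \<omega> - Y j \<omega>)) \<partial>M)"
  proof (rule integral_mono)
    show "integrable M (\<lambda>\<omega>. - 2 * (\<Sum>j<m. (S j \<omega> - c) * (Y (Suc j) \<omega> - Y j \<omega>)))"
      by (auto intro!: Bochner_Integration.integrable_sum intterm)
    fix \<omega> assume "\<omega> \<in> space M"
    from path[OF this, of m]
    show "(S m \<omega>)\<^sup>2 - 2 * (S m \<omega> * Y m \<omega>) + 2 * c * Y m \<omega> - c\<^sup>2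
      \<le> - 2 * (\<Sum>j<m. (S j \<omega> - c) * (Y (Suc j) \<omega> - Y j \<omega>))"
      by (simp add: power2_eq_square algebra_simps)
  qed (rule iL)
  also have "\<dots> = - 2 * (\<Sum>j<m. (\<integral>\<omega>. (S j \<omega> - c) * (Y (Suc j) \<omega> - Y j \<omega>) \<partial>M))"
    by (subst integral_mult_right_zero, subst Bochner_Integration.integral_sum) (auto intro: intterm)
  also have "\<dots> = 0" using zero by simp
  finally have "(\<integral>\<omega>. (S m \<omega>)\<^sup>2 - 2 * (S m \<omega> * Y m \<omega>) + 2 * c * Y m \<omega> - c\<^sup>2 \<partial>M) \<le> 0" .
  moreover have "(\<integral>\<omega>. (S m \<omega>)\<^sup>2 - 2 * (S m \<omega> * Y m \<omega>) + 2 * c * Y m \<omega> - c\<^sup>2 \<partial>M)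
      = ?A2 - 2 * ?AB + 2 * c * c - c\<^sup>2"
    using EY[of m] im by (simp add: prob_space)
  ultimately have key: "?A2 - 2 * ?AB + c\<^sup>2 \<le> 0" by (simp add: power2_eq_square)
  define D where "D = (\<lambda>\<omega>. S m \<omega> - Y m \<omega>)"
  have iD: "integrable M D" unfolding D_def using im by auto
  have iD2: "integrable M (\<lambda>\<omega>. (D \<omega>)\<^sup>2)"
  proof -
    have "integrable M (\<lambda>\<omega>. (S m \<omega>)\<^sup>2 - 2 * (S m \<omega> * Y m \<omega>) + (Y m \<omega>)\<^sup>2)"
      using im by (intro Bochner_Integration.integrable_diff Bochner_Integration.integrable_add integrable_mult_right) auto
    then show ?thesis unfolding D_def by (simp add: power2_eq_square algebra_simps)
  qed
  have ED: "expectation D = ?ES - c" unfolding D_def using EY[of m] im by simp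
  have ED2: "expectation (\<lambda>\<omega>. (D \<omega>)\<^sup>2) = ?A2 - 2 * ?AB + ?V"
  proof -
    have "expectation (\<lambda>\<omega>. (D \<omega>)\<^sup>2) = (\<integral>\<omega>. (S m \<omega>)\<^sup>2 - 2 * (S m \<omega> * Y m \<omega>) + (Y m \<omega>)\<^sup>2 \<partial>M)"
      unfolding D_def by (rule Bochner_Integration.integral_cong) (auto simp: power2_eq_square algebra_simps)
    also have "\<dots> = ?A2 - 2 * ?AB + ?V" using im by simp
    finally show ?thesis .
  qed
  have v: "variance D = expectation (\<lambda>\<omega>. (D \<omega>)\<^sup>2) - (expectation D)\<^sup>2"
    by (rule variance_eq[OF iD iD2])
  have "0 \<le> expectation (\<lambda>\<omega>. (D \<omega>)\<^sup>2) - (expectation D)\<^sup>2"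
    using variance_positive[of D] unfolding v .
  then have "(?ES - c)\<^sup>2 \<le> ?A2 - 2 * ?AB + ?V"
    unfolding ED ED2 by simp
  then have dle: "(?ES - c)\<^sup>2 \<le> ?V - c\<^sup>2" using key by simp
  have "?ES \<le> sqrt 2 * sqrt ?V" by (rule final_arith[OF dle])
  then show ?thesis using intS[of m] unfolding S_def by simp
qed

theorem mainTheorem6:
  fixes M :: "'a measure" and F :: "real \<Rightarrow> 'a measure"
    and X :: "real \<Rightarrow> 'a \<Rightarrow> real" and T :: real
  assumes "T > 0"
    and "cont_martingale M F T X"
    and "\<exists>c. \<forall>\<omega>\<in>space M. X 0 \<omega> = c"
    and "integrable M (\<lambda>\<omega>. (X T \<omega>)\<^sup>2)"
  shows "integrable M (\<lambda>\<omega>. SUP s\<in>{0..T}. X s \<omega>) \<and>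
         (\<integral>\<omega>. (SUP s\<in>{0..T}. X s \<omega>) \<partial>M) \<le> sqrt 2 * sqrt (\<integral>\<omega>. (X T \<omega>)\<^sup>2 \<partial>M)"
proof -
  note cm = assms(2)[unfolded cont_martingale_def]
  have P: "prob_space M" using cm by blast
  interpret prob_space M by (rule P)
  have sub: "\<And>t. t \<in> {0..T} \<Longrightarrow> subalgebra M (F t)" using cm by blast
  have nest: "\<And>s t. 0 \<le> s \<Longrightarrow> s \<le> t \<Longrightarrow> t \<le> T \<Longrightarrow> sets (F s) \<subseteq> sets (F t)" using cm by blast
  have meas: "\<And>t. t \<in> {0..T} \<Longrightarrow> X t \<in> borel_measurable (F t)" using cm by blast
  have intX: "\<And>t. t \<in> {0..T} \<Longrightarrow> integrable M (X t)" using cm by blast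
  have mart: "\<And>s t. 0 \<le> s \<Longrightarrow> s \<le> t \<Longrightarrow> t \<le> T \<Longrightarrow>
        (AE \<omega> in M. real_cond_exp M (F s) (X t) \<omega> = X s \<omega>)" using cm by blast
  have cont: "\<And>\<omega>. \<omega> \<in> space M \<Longrightarrow> continuous_on {0..T} (\<lambda>t. X t \<omega>)" using cm by blast
  obtain c where c: "\<And>\<omega>. \<omega> \<in> space M \<Longrightarrow> X 0 \<omega> = c" using assms(3) by blast
  have T0: "0 \<le> T" using assms(1) by simp
  have sq: "integrable M (\<lambda>\<omega>. (X t \<omega>)\<^sup>2)" if t: "t \<in> {0..T}" for t
  proof -
    have "finite_measure_subalgebra M (F t)"
      by unfold_locales (use sub[OF t] in auto)
    then interpret sigma_finite_subalgebra M "F t"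
      by (rule finite_measure_subalgebra_is_sigma_finite)
    have XTm: "X T \<in> borel_measurable M"
      using intX[of T] T0 by auto
    have "integrable M (\<lambda>\<omega>. power2 (real_cond_exp M (F t) (X T) \<omega>))"
      by (rule integrable_convex_cond_exp[of "X T" UNIV]) 
         (use intX[of T] T0 assms(4) convex_power2 in auto)
    moreover have "(\<lambda>\<omega>. (X t \<omega>)\<^sup>2) \<in> borel_measurable M"
      using intX[OF t] by (auto intro: borel_measurable_power)
    moreover have "AE \<omega> in M. power2 (real_cond_exp M (F t) (X T) \<omega>) = (X t \<omega>)\<^sup>2"
      using mart[of t T] t by auto
    ultimately show ?thesis by (rule integrable_cong_AE_imp)
  qed
  define S where "S = (\<lambda>n::nat. \<lambda>\<omega>. Max ((\<lambda>k. X (T * real k / 2^n) \<omega>) ` {..(2::nat)^n}))"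
  define B where "B = sqrt 2 * sqrt (\<integral>\<omega>. (X T \<omega>)\<^sup>2 \<partial>M)"
  have grid: "T * real k / 2^n \<in> {0..T}" if "k \<le> 2^n" for k n :: nat
  proof -
    have "real k \<le> 2^n" using that by (metis of_nat_le_iff of_nat_numeral of_nat_power)
    then have "T * real k \<le> T * 2^n" using T0 by (simp add: mult_left_mono)
    then show ?thesis using T0 by (simp add: field_simps)
  qed
  have gmono: "T * real i / 2^n \<le> T * real k / 2^n" if "i \<le> k" for i k n :: nat
    using that T0 by (simp add: divide_right_mono mult_left_mono)
  have Sn: "integrable M (S n) \<and> (\<integral>\<omega>. S n \<omega> \<partial>M) \<le> B" for n
  proof -
    have "integrable M (\<lambda>\<omega>. Max ((\<lambda>i. X (T * real i / 2^n) \<omega>) ` {..2^n})) \<and>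
         (\<integral>\<omega>. Max ((\<lambda>i. X (T * real i / 2^n) \<omega>) ` {..2^n}) \<partial>M)
            \<le> sqrt 2 * sqrt (\<integral>\<omega>. (X (T * real ((2::nat)^n) / 2^n) \<omega>)\<^sup>2 \<partial>M)"
    proof (rule discrete_bound[where G="\<lambda>k. F (T * real k / 2^n)" and c=c])
      show "prob_space M" by (rule P)
      show "subalgebra M (F (T * real k / 2 ^ n))" if "k \<le> 2^n" for k
        using sub grid that by blast
      show "sets (F (T * real i / 2 ^ n)) \<subseteq> sets (F (T * real k / 2 ^ n))"
        if "i \<le> k" "k \<le> 2^n" for i k
        using nest[of "T * real i / 2 ^ n" "T * real k / 2 ^ n"] grid[of i n] grid[OF that(2)] gmono[OF that(1)]
        by auto
      show "X (T * real k / 2 ^ n) \<in> borel_measurable (F (T * real k / 2 ^ n))" if "k \<le> 2^n" for k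
        using meas grid that by blast
      show "integrable M (\<lambda>\<omega>. (X (T * real k / 2 ^ n) \<omega>)\<^sup>2)" if "k \<le> 2^n" for k
        using sq grid that by blast
      show "integrable M (X (T * real k / 2 ^ n))" if "k \<le> 2^n" for k
        using intX grid that by blast
      show "AE \<omega> in M. real_cond_exp M (F (T * real k / 2 ^ n)) (X (T * real (Suc k) / 2 ^ n)) \<omega>
              = X (T * real k / 2 ^ n) \<omega>" if "k < 2^n" for k
        using mart[of "T * real k / 2 ^ n" "T * real (Suc k) / 2 ^ n"] grid[of k n] grid[of "Suc k" n]
          gmono[of k "Suc k" n] that by auto
      show "X (T * real 0 / 2 ^ n) \<omega> = c" if "\<omega> \<in> space M" for \<omega>
        using c that by simp
    qed
    moreover have "T * real ((2::nat)^n) / 2^n = T" by simp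
    ultimately show ?thesis unfolding S_def B_def by simp
  qed
  define g where "g = (\<lambda>\<omega>. SUP s\<in>{0..T}. X s \<omega>)"
  have lim: "(\<lambda>n. S n \<omega>) \<longlonglongrightarrow> g \<omega>" if "\<omega> \<in> space M" for \<omega>
    using grid_lim(2)[OF assms(1) cont[OF that]] unfolding S_def g_def .
  have smono: "mono (\<lambda>n. S n \<omega>)" if "\<omega> \<in> space M" for \<omega>
    using grid_lim(1)[OF assms(1) cont[OF that]] unfolding S_def .
  have gm: "g \<in> borel_measurable M"
    by (rule borel_measurable_LIMSEQ_real[OF lim]) (use Sn in auto)
  have imono: "incseq (\<lambda>n. \<integral>\<omega>. S n \<omega> \<partial>M)"
  proof (rule incseq_SucI)
    fix n
    show "(\<integral>\<omega>. S n \<omega> \<partial>M) \<le> (\<integral>\<omega>. S (Suc n) \<omega> \<partial>M)"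
      using Sn[of n] Sn[of "Suc n"] smono by (intro integral_mono) (auto simp: mono_def)
  qed
  have ibdd: "bdd_above (range (\<lambda>n. \<integral>\<omega>. S n \<omega> \<partial>M))"
    using Sn by (auto intro!: bdd_aboveI)
  have ilim: "(\<lambda>n. \<integral>\<omega>. S n \<omega> \<partial>M) \<longlonglongrightarrow> (SUP n. \<integral>\<omega>. S n \<omega> \<partial>M)"
    by (rule LIMSEQ_incseq_SUP[OF ibdd imono])
  have "(SUP n. \<integral>\<omega>. S n \<omega> \<partial>M) \<le> B"
    using Sn by (intro cSUP_least) auto
  moreover have "integrable M g" "(\<integral>\<omega>. g \<omega> \<partial>M) = (SUP n. \<integral>\<omega>. S n \<omega> \<partial>M)"
    by (rule integrable_monotone_convergence[OF _ _ _ ilim gm] integral_monotone_convergence[OF _ _ _ ilim gm];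
        use Sn smono lim in \<open>auto intro: AE_I2\<close>)+
  ultimately show ?thesis unfolding g_def B_def by simp
qed

end
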